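(* Let $X$ be a $\mathbb{Z}^n$-periodic discrete metric space with $N$ orbits and let $A\in\mathcal{W}(X)$ be $\mathbb{Z}^n$-periodic ($T_\alpha A=AT_\alpha$ for all $\alpha$). Then $UAU^{-1}$ is a shift-invariant operator in $W(\mathbb{Z}^n,\mathbb{C}^N)$: $UAU^{-1}=\sum_{\beta\in\mathbb{Z}^n}r_A(\beta)V_\beta$, where $r_A(\beta)=(r_A^{ij}(\beta,0))_{i,j=1}^N$ are constant matrices with $|r_A^{ij}(\beta,0)|\le h(\beta)$ for some nonnegative $h\in l^1(\mathbb{Z}^n)$; in particular $A$ is isometrically equivalent (via the isometry $U$) to this shift-invariant matrix operator.
   Context: A discrete metric space is a countable set $X$ with a metric $\rho$ such that every ball is finite. It is $\mathbb{Z}^n$-periodic if $\mathbb{Z}^n$ acts on $X$ by $\rho$-isometries, $(\alpha,x)\mapsto\alpha\cdot x$ (a group action), freely, with finitely many orbits; $x_1,\dots,x_N$ are fixed orbit representatives. $U$: $(Uf)(\alpha)=(f(\alpha\cdot x_1),\dots,f(\alpha\cdot x_N))$, an isometry $l^p(X)\to l^p(\mathbb{Z}^n,\mathbb{C}^N)$. $(T_\alpha u)(x)=u((-\alpha)\cdot x)$, $(V_\beta u)(x)=u(x-\beta)$. For a linear operator $A$ with generating function $k_A$ (i.e. $(Au)(x)=\sum_y k_A(x,y)u(y)$ for finitely supported $u$), $r_A^{ij}(\alpha,\beta)=k_A(\alpha\cdot x_i,\beta\cdot x_j)$. $\mathcal{W}(X)$: such operators with $\max_j\sum_i|r_A^{ij}(\alpha,\beta)|\le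 h_A(\alpha-\beta)$ for some $h_A\in l^1(\mathbb{Z}^n)$. $W(\mathbb{Z}^n,\mathbb{C}^N)$: operators $\sum_\alpha a_\alpha V_\alpha$, $a_\alpha\in l^\infty(\mathbb{Z}^n,\mathbb{C}^{N\times N})$, with $\sum_\alpha\|a_\alpha\|_{l^\infty}<\infty$. *)

theory Defs
  imports "HOL-Analysis.Analysis"
begin

definition discrete_metric_space :: "('x \<Rightarrow> 'x \<Rightarrow> real) \<Rightarrow> bool" where
  "discrete_metric_space \<rho> \<longleftrightarrow>
     countable (UNIV :: 'x set) \<and>
     (\<forall>x y. \<rho> x y = 0 \<longleftrightarrow> x = y) \<and>
     (\<forall>x y. \<rho> x y = \<rho> y x) \<and>
     (\<forall>x y z. \<rho> x z \<le> \<rho> x y + \<rho> y z) \<and>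
     (\<forall>x r. finite {y. \<rho> x y \<le> r})"

text \<open>Z^n-periodic discrete metric space; the orbits are indexed by the finite type 'i
  (so N = CARD('i)), xs i being the fixed orbit representatives.\<close>
definition periodic_space ::
  "('x \<Rightarrow> 'x \<Rightarrow> real) \<Rightarrow> (int^'n \<Rightarrow> 'x \<Rightarrow> 'x) \<Rightarrow> ('i::finite \<Rightarrow> 'x) \<Rightarrow> bool" where
  "periodic_space \<rho> act xs \<longleftrightarrow>
     discrete_metric_space \<rho> \<and>
     (\<forall>x. act 0 x = x) \<and>
     (\<forall>a b x. act (a + b) x = act a (act b x)) \<and>
     (\<forall>a x y. \<rho> (act a x) (act a y) = \<rho> x y) \<and>
     (\<forall>a x. act a x = x \<longrightarrow> a = 0) \<and>
     (\<forall>x. \<exists>a i. x = act a (xs i)) \<and>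
     (\<forall>a i j. act a (xs i) = xs j \<longrightarrow> i = j)"

definition fin_supp :: "('a \<Rightarrow> 'b::zero) \<Rightarrow> bool" where
  "fin_supp u \<longleftrightarrow> finite {y. u y \<noteq> 0}"

definition Top :: "(int^'n \<Rightarrow> 'x \<Rightarrow> 'x) \<Rightarrow> int^'n \<Rightarrow> ('x \<Rightarrow> complex) \<Rightarrow> ('x \<Rightarrow> complex)" where
  "Top act \<alpha> u = (\<lambda>x. u (act (- \<alpha>) x))"

definition Vop :: "int^'n \<Rightarrow> (int^'n \<Rightarrow> 'b) \<Rightarrow> (int^'n \<Rightarrow> 'b)" where
  "Vop \<beta> v = (\<lambda>\<alpha>. v (\<alpha> - \<beta>))"

definition gen_fun :: "(('x \<Rightarrow> complex) \<Rightarrow> ('x \<Rightarrow> complex)) \<Rightarrow> ('x \<Rightarrow> 'x \<Rightarrow> complex) \<Rightarrow> bool" where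
  "gen_fun A k \<longleftrightarrow> (\<forall>u. fin_supp u \<longrightarrow> A u = (\<lambda>x. \<Sum>y\<in>{y. u y \<noteq> 0}. k x y * u y))"

definition Uop :: "(int^'n \<Rightarrow> 'x \<Rightarrow> 'x) \<Rightarrow> ('i::finite \<Rightarrow> 'x) \<Rightarrow> ('x \<Rightarrow> complex) \<Rightarrow> (int^'n \<Rightarrow> complex^'i)" where
  "Uop act xs f = (\<lambda>\<alpha>. \<chi> i. f (act \<alpha> (xs i)))"

definition Uinv :: "(int^'n \<Rightarrow> 'x \<Rightarrow> 'x) \<Rightarrow> ('i::finite \<Rightarrow> 'x) \<Rightarrow> (int^'n \<Rightarrow> complex^'i) \<Rightarrow> ('x \<Rightarrow> complex)" where
  "Uinv act xs v = (\<lambda>x. THE c. \<exists>\<alpha> i. x = act \<alpha> (xs i) \<and> c = v \<alpha> $ i)"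

definition rker :: "(int^'n \<Rightarrow> 'x \<Rightarrow> 'x) \<Rightarrow> ('i::finite \<Rightarrow> 'x) \<Rightarrow> ('x \<Rightarrow> 'x \<Rightarrow> complex)
    \<Rightarrow> 'i \<Rightarrow> 'i \<Rightarrow> int^'n \<Rightarrow> int^'n \<Rightarrow> complex" where
  "rker act xs k i j \<alpha> \<beta> = k (act \<alpha> (xs i)) (act \<beta> (xs j))"

definition in_WX :: "(int^'n \<Rightarrow> 'x \<Rightarrow> 'x) \<Rightarrow> ('i::finite \<Rightarrow> 'x) \<Rightarrow> ('x \<Rightarrow> 'x \<Rightarrow> complex) \<Rightarrow> bool" where
  "in_WX act xs k \<longleftrightarrow> (\<exists>h :: int^'n \<Rightarrow> real. h summable_on UNIV \<and>
      (\<forall>\<alpha> \<beta> j. (\<Sum>i\<in>UNIV. norm (rker act xs k i j \<alpha> \<beta>)) \<le> h (\<alpha> - \<beta>)))"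

definition shift_op :: "(int^'n \<Rightarrow> complex^'i^'i) \<Rightarrow> (int^'n \<Rightarrow> complex^'i) \<Rightarrow> (int^'n \<Rightarrow> complex^'i)" where
  "shift_op a v = (\<lambda>\<alpha>. \<Sum>\<^sub>\<infinity>\<beta>. a \<beta> *v Vop \<beta> v \<alpha>)"

end

theory Submission
  imports Defs
begin

theorem proposition4p2:
  fixes \<rho> :: "'x \<Rightarrow> 'x \<Rightarrow> real" and act :: "int^'n \<Rightarrow> 'x \<Rightarrow> 'x"
    and xs :: "'i::finite \<Rightarrow> 'x"
    and A :: "('x \<Rightarrow> complex) \<Rightarrow> ('x \<Rightarrow> complex)" and k :: "'x \<Rightarrow> 'x \<Rightarrow> complex"
  assumes "periodic_space \<rho> act xs"
    and "gen_fun A k"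
    and "in_WX act xs k"
    and "\<forall>\<alpha> u. fin_supp u \<longrightarrow> Top act \<alpha> (A u) = A (Top act \<alpha> u)"
  shows "(\<forall>v. fin_supp v \<longrightarrow>
            Uop act xs (A (Uinv act xs v)) = shift_op (\<lambda>\<beta>. \<chi> i j. rker act xs k i j \<beta> 0) v)
       \<and> (\<exists>h :: int^'n \<Rightarrow> real. (\<forall>\<beta>. 0 \<le> h \<beta>) \<and> h summable_on UNIV \<and>
            (\<forall>\<beta> i j. norm (rker act xs k i j \<beta> 0) \<le> h \<beta>))"
proof
  note pp = assms(1)[unfolded periodic_space_def]
  note act0 = pp[THEN conjunct2, THEN conjunct1, rule_format]
  note actc = pp[THEN conjunct2, THEN conjunct2, THEN conjunct1, rule_format]
  note free = pp[THEN conjunct2, THEN conjunct2, THEN conjunct2, THEN conjunct2, THEN conjunct1, rule_format]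
  note cover = pp[THEN conjunct2, THEN conjunct2, THEN conjunct2, THEN conjunct2, THEN conjunct2, THEN conjunct1, rule_format]
  note orb = pp[THEN conjunct2, THEN conjunct2, THEN conjunct2, THEN conjunct2, THEN conjunct2, THEN conjunct2, rule_format]
  have uniq: "a = b \<and> i = j" if "act a (xs i) = act b (xs j)" for a b i j
  proof -
    have "act (-b + a) (xs i) = act (-b + b) (xs j)" unfolding actc using that by simp
    hence e: "act (-b + a) (xs i) = xs j" by (simp add: act0)
    hence "i = j" by (rule orb)
    with e have "-b + a = 0" using free by blast
    thus ?thesis using \<open>i = j\<close> by (simp add: algebra_simps)
  qed
  have kgen: "\<And>u. fin_supp u \<Longrightarrow> A u = (\<lambda>x. \<Sum>y\<in>{y. u y \<noteq> 0}. k x y * u y)"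
    using assms(2)[unfolded gen_fun_def, rule_format] .
  have kshift: "k (act (-a) x) y = k x (act a y)" for a x y
  proof -
    define d where "d = (\<lambda>z. if z = y then 1 else 0 :: complex)"
    have fd: "fin_supp d" unfolding fin_supp_def d_def by simp
    have Ad: "A d = (\<lambda>x. k x y)" using kgen[OF fd] by (simp add: d_def)
    have td: "Top act a d = (\<lambda>z. if z = act a y then 1 else 0)"
    proof
      fix z
      have "act (-a) z = y \<longleftrightarrow> z = act a y"
      proof
        assume "act (-a) z = y" hence "act a (act (-a) z) = act a y" by simp
        thus "z = act a y" by (simp add: actc[symmetric] act0)
      next
        assume "z = act a y" thus "act (-a) z = y" by (simp add: actc[symmetric] act0)
      qed
      thus "Top act a d z = (if z = act a y then 1 else 0)" by (simp add: Top_def d_def)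
    qed
    have ftd: "fin_supp (Top act a d)" unfolding td fin_supp_def by simp
    have "A (Top act a d) = (\<lambda>x. k x (act a y))" using kgen[OF ftd] by (simp add: td)
    moreover have "Top act a (A d) = (\<lambda>x. k (act (-a) x) y)" by (simp add: Ad Top_def)
    moreover have "Top act a (A d) = A (Top act a d)" using assms(4)[rule_format, OF fd] .
    ultimately have "(\<lambda>x. k (act (-a) x) y) = (\<lambda>x. k x (act a y))" by simp
    thus ?thesis by (rule fun_cong)
  qed
  have kr: "k (act a (xs i)) (act b (xs j)) = rker act xs k i j (a - b) 0" for a b i j
    using kshift[of b "act a (xs i)" "xs j"]
    by (simp add: rker_def act0 actc[symmetric] algebra_simps)
  show "\<forall>v. fin_supp v \<longrightarrow>
            Uop act xs (A (Uinv act xs v)) = shift_op (\<lambda>\<beta>. \<chi> i j. rker act xs k i j \<beta> 0) v"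
  proof (intro allI impI)
    fix v :: "int^'n \<Rightarrow> complex^'i"
    assume fv: "fin_supp v"
    define B where "B = {g. v g \<noteq> 0}"
    have fB: "finite B" using fv unfolding fin_supp_def B_def .
    define u where "u = Uinv act xs v"
    have uv: "u (act a (xs i)) = v a $ i" for a i
      unfolding u_def Uinv_def
      by (rule the_equality) (auto dest!: uniq)
    define P where "P = (\<lambda>(g, j). act g (xs j)) ` (B \<times> UNIV)"
    have inj: "inj_on (\<lambda>(g, j). act g (xs j)) (B \<times> UNIV)"
      by (auto simp: inj_on_def dest!: uniq)
    have supp: "{y. u y \<noteq> 0} \<subseteq> P"
    proof
      fix y assume "y \<in> {y. u y \<noteq> 0}"
      moreover obtain a i where y: "y = act a (xs i)" using cover by blast
      ultimately have "v a \<noteq> 0" by (auto simp: uv)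
      thus "y \<in> P" unfolding P_def B_def y by auto
    qed
    have fP: "finite P" unfolding P_def using fB by simp
    have fu: "fin_supp u" unfolding fin_supp_def using finite_subset[OF supp fP] .
    show "Uop act xs (A (Uinv act xs v)) = shift_op (\<lambda>\<beta>. \<chi> i j. rker act xs k i j \<beta> 0) v"
    proof
      fix \<alpha>
      have lhs: "A u (act \<alpha> (xs i)) = (\<Sum>g\<in>B. \<Sum>j\<in>UNIV. rker act xs k i j (\<alpha> - g) 0 * v g $ j)" for i
      proof -
        have "A u (act \<alpha> (xs i)) = (\<Sum>y\<in>{y. u y \<noteq> 0}. k (act \<alpha> (xs i)) y * u y)"
          using kgen[OF fu] by simp
        also have "\<dots> = (\<Sum>y\<in>P. k (act \<alpha> (xs i)) y * u y)"
          by (rule sum.mono_neutral_left[OF fP supp]) auto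
        also have "\<dots> = (\<Sum>(g,j)\<in>B \<times> UNIV. k (act \<alpha> (xs i)) (act g (xs j)) * u (act g (xs j)))"
          unfolding P_def by (subst sum.reindex[OF inj]) (simp add: case_prod_unfold)
        also have "\<dots> = (\<Sum>(g,j)\<in>B \<times> UNIV. rker act xs k i j (\<alpha> - g) 0 * v g $ j)"
          by (simp add: kr uv)
        also have "\<dots> = (\<Sum>g\<in>B. \<Sum>j\<in>UNIV. rker act xs k i j (\<alpha> - g) 0 * v g $ j)"
          by (simp add: sum.cartesian_product)
        finally show ?thesis .
      qed
      define F where "F = (\<lambda>\<beta>. (\<chi> i j. rker act xs k i j \<beta> 0) *v Vop \<beta> v \<alpha>)"
      have "shift_op (\<lambda>\<beta>. \<chi> i j. rker act xs k i j \<beta> 0) v \<alpha> = infsum F UNIV"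
        by (simp add: shift_op_def F_def)
      also have "\<dots> = infsum F ((\<lambda>g. \<alpha> - g) ` B)"
      proof (rule infsum_cong_neutral)
        fix x assume "x \<in> UNIV - (\<lambda>g. \<alpha> - g) ` B"
        hence xn: "x \<notin> (\<lambda>g. \<alpha> - g) ` B" by simp
        have "\<alpha> - x \<notin> B"
        proof
          assume "\<alpha> - x \<in> B"
          hence "\<alpha> - (\<alpha> - x) \<in> (\<lambda>g. \<alpha> - g) ` B" by (rule imageI)
          thus False using xn by simp
        qed
        thus "F x = 0" by (simp add: F_def Vop_def B_def)
      qed auto
      also have "\<dots> = sum F ((\<lambda>g. \<alpha> - g) ` B)" using fB by simp
      also have "\<dots> = sum (\<lambda>g. F (\<alpha> - g)) B"
        by (subst sum.reindex) (auto simp: inj_on_def)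
      finally have rhs: "shift_op (\<lambda>\<beta>. \<chi> i j. rker act xs k i j \<beta> 0) v \<alpha> = sum (\<lambda>g. F (\<alpha> - g)) B" .
      show "Uop act xs (A (Uinv act xs v)) \<alpha> = shift_op (\<lambda>\<beta>. \<chi> i j. rker act xs k i j \<beta> 0) v \<alpha>"
        unfolding rhs
        by (simp add: vec_eq_iff Uop_def u_def[symmetric] lhs sum_component F_def
            matrix_vector_mult_def Vop_def)
    qed
  qed
next
  obtain h :: "int^'n \<Rightarrow> real" where hs: "h summable_on UNIV"
    and hb: "\<And>\<alpha> \<beta> j. (\<Sum>i\<in>UNIV. norm (rker act xs k i j \<alpha> \<beta>)) \<le> h (\<alpha> - \<beta>)"
    using assms(3) unfolding in_WX_def by blast
  have nb: "norm (rker act xs k i j \<beta> 0) \<le> h \<beta>" for \<beta> i j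
  proof -
    have "norm (rker act xs k i j \<beta> 0) \<le> (\<Sum>i\<in>UNIV. norm (rker act xs k i j \<beta> 0))"
      by (rule member_le_sum) auto
    also have "\<dots> \<le> h \<beta>" using hb[of j \<beta> 0] by simp
    finally show ?thesis .
  qed
  have "0 \<le> h \<beta>" for \<beta>
    using nb[of undefined undefined \<beta>] norm_ge_zero order_trans by blast
  with hs nb show "\<exists>h :: int^'n \<Rightarrow> real. (\<forall>\<beta>. 0 \<le> h \<beta>) \<and> h summable_on UNIV \<and>
            (\<forall>\<beta> i j. norm (rker act xs k i j \<beta> 0) \<le> h \<beta>)" by blast
qed

end
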